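(* Let $P\in LC(\tau)$ for a skeleton $\tau$ on a countable alphabet $A$, with good probabilistic skeleton $(\tau,p)$ and good coalescence time $\bar\theta[0]$. Then for every integer $i\ge0$, $$\mathbb P(L_0>i)\le\big(\mathbb E|\bar\theta[0]|+1\big)\,\mathbb P\big(U_0\ge\alpha_i^{c_\tau^{-1}}\big),$$ and moreover $\mathbb P(L_0\le i)\ge\alpha_{-1}$. Consequently $\mathbb P(L_0\le i)\ge\max\{1-(\mathbb E|\bar\theta[0]|+1)\mathbb P(U_0\ge\alpha_i^{c_\tau^{-1}}),\alpha_{-1}\}$.
   Context: Notation. $A$ is a countable alphabet, enumerated as $\{1,2,\dots\}$ (or an initial segment). A past is $\underline a=\ldots a_{-2}a_{-1}\in A^{-\mathbb N}$; concatenation puts the older part on the left ($\underline z\,w\,v$ is the past ending with $v$, preceded by $w$, preceded by $\underline z$). A kernel is $P:A\times A^{-\mathbb N}\to[0,1]$ with $\sum_aP(a|\underline a)=1$. $\alpha(a):=\inf_{\underline z}P(a|\underline z)$, $\alpha_{-1}:=\sum_a\alpha(a)$. Context trees: a context tree is $\tau\subset A^{-\mathbb N}\cup A^\star$ such that every past has exactly one element of $\tau$ as suffix, denoted $c_\tau(\underline a)$, and no element is a proper suffix of another; ${}^{<\infty}\tau$, ${}^\infty\tau$ are its finite/infinite elements. A skeleton is a context tree which is the smallest context tree containing its infinite elements ($\{\emptyset\}$ is also a skeleton). For $v\in{}^{<\infty}\tau$, $k\ge0$: $\alpha_k^v:=\inf_{w\in A^k}\sum_a\inf_{\underline z}P(a|\underline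 z\,w\,v)$; $P\in LC(\tau)$ if $\alpha_k^v\to1$ for all finite $v\in\tau$; for integers $i,k\ge0$, $\alpha_k^i:=\inf\{\alpha_k^v:v\in{}^{<\infty}\tau,|v|\le i\}$ (inf of empty set $=1$), and $\alpha^i_{-1}:=\alpha_{-1}$. Probabilistic skeleton $(\tau,p)$: $p(a|v)=\inf_{\underline z}P(a|\underline zv)$ for finite $v$, $p(a|v)=P(a|v)$ for infinite $v$. $\mathbf U=(U_i)$ i.i.d. uniform on $[0,1)$. $Y_i:=a$ if $\sum_{b<a}\alpha(b)\le U_i<\sum_{b\le a}\alpha(b)$, $Y_i:=\star$ if $U_i\ge\alpha_{-1}$; $Y_i(\mathbf a):=Y_i$ if $Y_i\in A$, else $a_i$; $c^n_\tau:=\sup_{\mathbf a}|c_\tau(\ldots Y_{n-1}(\mathbf a)Y_n(\mathbf a))|$; $\bar\theta[m]:=\sup\{i\le m:\forall j\in\{i,\dots,m\},\ Y_j\in A\text{ or }c^j_\tau\le j-i\}$ (sup of empty set $=-\infty$); $(\tau,p)$ is good if $\mathbb E|\bar\theta[0]|<\infty$. Block construction: $\theta^{-1}:=1$, $\theta^k:=\bar\theta[\theta^{k-1}-1]$ for $k\ge0$, $B_k:=\{\theta^k,\dots,\theta^{k-1}-1\}$. For $l\in\mathbb Z$, $\zeta_l:=0$ if $U_l<\alpha_{-1}$, and otherwise $\zeta_l$ is the integer $k\ge0$ with $\alpha^{c^{l-1}_\tau}_{k-1}\le U_l<\alpha^{c^{l-1}_\tau}_k$ ($\zeta_l:=\infty$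 if there is none). $L_k:=\sup_{l\in B_k}\zeta_l$. *)

theory Defs
  imports "HOL-Probability.Probability"
begin

(* Encoding conventions:
   - the alphabet is a set A of naturals ({1,2,...} or an initial segment {1..n});
   - a past  ... a_{-2} a_{-1}  is a function x :: nat => nat with  x j = a_{-(j+1)};
   - a finite string v (a context) is a list stored MOST RECENT FIRST:
     v ! 0 is the last (most recent) letter.  Thus v is a suffix of the past x
     iff x j = v ! j for all j < length v, and the past  z w v  is  cat (v @ w) z. *)

type_synonym past = "nat \<Rightarrow> nat"

datatype ctx = Fin "nat list" | Infc "nat \<Rightarrow> nat"

definition Pasts :: "nat set \<Rightarrow> past set" where
  "Pasts A = {x. \<forall>j. x j \<in> A}"

definition cat :: "nat list \<Rightarrow> past \<Rightarrow> past" where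
  "cat vs z = (\<lambda>j. if j < length vs then vs ! j else z (j - length vs))"

fun ctx_suffix :: "ctx \<Rightarrow> ctx \<Rightarrow> bool" where
  "ctx_suffix (Fin v) (Fin w) = (length v \<le> length w \<and> take (length v) w = v)"
| "ctx_suffix (Fin v) (Infc x) = (\<forall>j<length v. x j = v ! j)"
| "ctx_suffix (Infc x) (Infc y) = (x = y)"
| "ctx_suffix (Infc x) (Fin w) = False"

fun ctx_over :: "nat set \<Rightarrow> ctx \<Rightarrow> bool" where
  "ctx_over A (Fin v) = (set v \<subseteq> A)"
| "ctx_over A (Infc x) = (x \<in> Pasts A)"

fun ctx_len :: "ctx \<Rightarrow> enat" where
  "ctx_len (Fin v) = enat (length v)"
| "ctx_len (Infc x) = \<infinity>"

definition context_tree :: "nat set \<Rightarrow> ctx set \<Rightarrow> bool" where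
  "context_tree A \<tau> \<longleftrightarrow>
     (\<forall>c\<in>\<tau>. ctx_over A c) \<and>
     (\<forall>x\<in>Pasts A. \<exists>!c. c \<in> \<tau> \<and> ctx_suffix c (Infc x)) \<and>
     (\<forall>c\<in>\<tau>. \<forall>d\<in>\<tau>. \<not> (ctx_suffix c d \<and> c \<noteq> d))"

definition inf_part :: "ctx set \<Rightarrow> ctx set" where
  "inf_part \<tau> = {c \<in> \<tau>. \<exists>x. c = Infc x}"

definition coarser :: "ctx set \<Rightarrow> ctx set \<Rightarrow> bool" where
  "coarser \<tau> \<tau>' \<longleftrightarrow> (\<forall>d\<in>\<tau>'. \<exists>c\<in>\<tau>. ctx_suffix c d)"

definition skeleton :: "nat set \<Rightarrow> ctx set \<Rightarrow> bool" where
  "skeleton A \<tau> \<longleftrightarrow> context_tree A \<tau> \<and>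
     (\<forall>\<tau>'. context_tree A \<tau>' \<and> inf_part \<tau> \<subseteq> \<tau>' \<longrightarrow> coarser \<tau> \<tau>')"

definition c_tau :: "ctx set \<Rightarrow> past \<Rightarrow> ctx" where
  "c_tau \<tau> x = (THE c. c \<in> \<tau> \<and> ctx_suffix c (Infc x))"

definition alpha :: "(nat \<Rightarrow> past \<Rightarrow> real) \<Rightarrow> nat set \<Rightarrow> nat \<Rightarrow> real" where
  "alpha P A a = (INF z\<in>Pasts A. P a z)"

definition alpha_m1 :: "(nat \<Rightarrow> past \<Rightarrow> real) \<Rightarrow> nat set \<Rightarrow> real" where
  "alpha_m1 P A = infsum (alpha P A) A"

definition alpha_kv :: "(nat \<Rightarrow> past \<Rightarrow> real) \<Rightarrow> nat set \<Rightarrow> nat \<Rightarrow> nat list \<Rightarrow> real" where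
  "alpha_kv P A k v =
     (INF w\<in>{w. length w = k \<and> set w \<subseteq> A}.
        infsum (\<lambda>a. INF z\<in>Pasts A. P a (cat (v @ w) z)) A)"

definition LC :: "(nat \<Rightarrow> past \<Rightarrow> real) \<Rightarrow> nat set \<Rightarrow> ctx set \<Rightarrow> bool" where
  "LC P A \<tau> \<longleftrightarrow> (\<forall>v. Fin v \<in> \<tau> \<longrightarrow> (\<lambda>k. alpha_kv P A k v) \<longlonglongrightarrow> 1)"

definition alpha_ki :: "(nat \<Rightarrow> past \<Rightarrow> real) \<Rightarrow> nat set \<Rightarrow> ctx set \<Rightarrow> enat \<Rightarrow> int \<Rightarrow> real" where
  "alpha_ki P A \<tau> i k =
     (if k < 0 then alpha_m1 P A
      else (let S = {alpha_kv P A (nat k) v | v. Fin v \<in> \<tau> \<and> enat (length v) \<le> i}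
            in if S = {} then 1 else Inf S))"

(* Y_i : None stands for \<star> *)
definition Yv :: "(nat \<Rightarrow> past \<Rightarrow> real) \<Rightarrow> nat set \<Rightarrow> (int \<Rightarrow> 'w \<Rightarrow> real) \<Rightarrow> int \<Rightarrow> 'w \<Rightarrow> nat option" where
  "Yv P A U i \<omega> =
     (if \<exists>a\<in>A. sum (alpha P A) {b\<in>A. b < a} \<le> U i \<omega> \<and> U i \<omega> < sum (alpha P A) {b\<in>A. b \<le> a}
      then Some (THE a. a \<in> A \<and> sum (alpha P A) {b\<in>A. b < a} \<le> U i \<omega> \<and> U i \<omega> < sum (alpha P A) {b\<in>A. b \<le> a})
      else None)"

definition Yfill :: "(nat \<Rightarrow> past \<Rightarrow> real) \<Rightarrow> nat set \<Rightarrow> (int \<Rightarrow> 'w \<Rightarrow> real) \<Rightarrow> int \<Rightarrow> (int \<Rightarrow> nat) \<Rightarrow> 'w \<Rightarrow> nat" where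
  "Yfill P A U i a \<omega> = (case Yv P A U i \<omega> of Some b \<Rightarrow> b | None \<Rightarrow> a i)"

(* c^n_\<tau> ; the past  ... Y_{n-1}(a) Y_n(a)  is  j \<mapsto> Y_{n-j}(a) *)
definition cn :: "(nat \<Rightarrow> past \<Rightarrow> real) \<Rightarrow> nat set \<Rightarrow> ctx set \<Rightarrow> (int \<Rightarrow> 'w \<Rightarrow> real) \<Rightarrow> int \<Rightarrow> 'w \<Rightarrow> enat" where
  "cn P A \<tau> U n \<omega> =
     (SUP a\<in>{a :: int \<Rightarrow> nat. \<forall>i. a i \<in> A}.
        ctx_len (c_tau \<tau> (\<lambda>j. Yfill P A U (n - int j) a \<omega>)))"

(* \<theta>bar[m]; value -\<infinity> when the set is empty *)
definition theta_bar :: "(nat \<Rightarrow> past \<Rightarrow> real) \<Rightarrow> nat set \<Rightarrow> ctx set \<Rightarrow> (int \<Rightarrow> 'w \<Rightarrow> real) \<Rightarrow> int \<Rightarrow> 'w \<Rightarrow> ereal" where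
  "theta_bar P A \<tau> U m \<omega> =
     Sup ((\<lambda>i. ereal (real_of_int i)) `
       {i. i \<le> m \<and> (\<forall>j\<in>{i..m}. Yv P A U j \<omega> \<noteq> None \<or> cn P A \<tau> U j \<omega> \<le> enat (nat (j - i)))})"

(* thetaB k = \<theta>^{k-1}:  \<theta>^{-1} = 1, \<theta>^k = \<theta>bar[\<theta>^{k-1} - 1]
   (convention: stays -\<infinity> once -\<infinity> is reached) *)
fun thetaB :: "(nat \<Rightarrow> past \<Rightarrow> real) \<Rightarrow> nat set \<Rightarrow> ctx set \<Rightarrow> (int \<Rightarrow> 'w \<Rightarrow> real) \<Rightarrow> nat \<Rightarrow> 'w \<Rightarrow> ereal" where
  "thetaB P A \<tau> U 0 \<omega> = 1"
| "thetaB P A \<tau> U (Suc k) \<omega> =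
     (if thetaB P A \<tau> U k \<omega> = -\<infinity> then -\<infinity>
      else theta_bar P A \<tau> U (\<lfloor>real_of_ereal (thetaB P A \<tau> U k \<omega>)\<rfloor> - 1) \<omega>)"

(* B_k = {\<theta>^k, ..., \<theta>^{k-1} - 1} *)
definition block :: "(nat \<Rightarrow> past \<Rightarrow> real) \<Rightarrow> nat set \<Rightarrow> ctx set \<Rightarrow> (int \<Rightarrow> 'w \<Rightarrow> real) \<Rightarrow> nat \<Rightarrow> 'w \<Rightarrow> int set" where
  "block P A \<tau> U k \<omega> =
     {l. thetaB P A \<tau> U (Suc k) \<omega> \<le> ereal (real_of_int l) \<and>
         ereal (real_of_int l) \<le> thetaB P A \<tau> U k \<omega> - 1}"

definition zeta :: "(nat \<Rightarrow> past \<Rightarrow> real) \<Rightarrow> nat set \<Rightarrow> ctx set \<Rightarrow> (int \<Rightarrow> 'w \<Rightarrow> real) \<Rightarrow> int \<Rightarrow> 'w \<Rightarrow> enat" where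
  "zeta P A \<tau> U l \<omega> =
     (if U l \<omega> < alpha_m1 P A then 0
      else if \<exists>k::nat. alpha_ki P A \<tau> (cn P A \<tau> U (l - 1) \<omega>) (int k - 1) \<le> U l \<omega> \<and>
                       U l \<omega> < alpha_ki P A \<tau> (cn P A \<tau> U (l - 1) \<omega>) (int k)
      then enat (LEAST k::nat. alpha_ki P A \<tau> (cn P A \<tau> U (l - 1) \<omega>) (int k - 1) \<le> U l \<omega> \<and>
                       U l \<omega> < alpha_ki P A \<tau> (cn P A \<tau> U (l - 1) \<omega>) (int k))
      else \<infinity>)"

definition Lk :: "(nat \<Rightarrow> past \<Rightarrow> real) \<Rightarrow> nat set \<Rightarrow> ctx set \<Rightarrow> (int \<Rightarrow> 'w \<Rightarrow> real) \<Rightarrow> nat \<Rightarrow> 'w \<Rightarrow> enat" where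
  "Lk P A \<tau> U k \<omega> = (SUP l\<in>block P A \<tau> U k \<omega>. zeta P A \<tau> U l \<omega>)"

(* E|\<theta>bar[0]| as an extended nonnegative real (\<infinity> if \<theta>bar[0] = -\<infinity> with positive probability) *)
definition E_abs_theta0 :: "'w measure \<Rightarrow> (nat \<Rightarrow> past \<Rightarrow> real) \<Rightarrow> nat set \<Rightarrow> ctx set \<Rightarrow> (int \<Rightarrow> 'w \<Rightarrow> real) \<Rightarrow> ennreal" where
  "E_abs_theta0 M P A \<tau> U = (\<integral>\<^sup>+ \<omega>. e2ennreal \<bar>theta_bar P A \<tau> U 0 \<omega>\<bar> \<partial>M)"

end

theory Submission imports Defs begin

definition br :: "(nat \<Rightarrow> past \<Rightarrow> real) \<Rightarrow> nat set \<Rightarrow> nat \<Rightarrow> real \<Rightarrow> bool" where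
  "br P A a u \<longleftrightarrow> sum (alpha P A) {b\<in>A. b < a} \<le> u \<and> u < sum (alpha P A) {b\<in>A. b \<le> a}"

definition yvf :: "(nat \<Rightarrow> past \<Rightarrow> real) \<Rightarrow> nat set \<Rightarrow> real \<Rightarrow> nat option" where
  "yvf P A u = (if \<exists>a\<in>A. br P A a u then Some (THE a. a \<in> A \<and> br P A a u) else None)"

lemma Yv_eq: "Yv P A U i \<omega> = yvf P A (U i \<omega>)"
  unfolding Yv_def yvf_def br_def by simp

lemma Pasts_ne: "(1::nat) \<in> A \<Longrightarrow> (\<lambda>_. 1) \<in> Pasts A"
  by (simp add: Pasts_def)

context
  fixes P :: "nat \<Rightarrow> past \<Rightarrow> real" and A :: "nat set" and \<tau> :: "ctx set"
  assumes A1: "1 \<in> A"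
    and kr: "\<forall>z\<in>Pasts A. \<forall>a\<in>A. 0 \<le> P a z \<and> P a z \<le> 1"
    and ct: "context_tree A \<tau>"
begin

lemma alpha_nonneg: "a \<in> A \<Longrightarrow> 0 \<le> alpha P A a"
  unfolding alpha_def using Pasts_ne[OF A1] kr by (intro cINF_greatest) auto

lemma alpha_le: "a \<in> A \<Longrightarrow> z \<in> Pasts A \<Longrightarrow> alpha P A a \<le> P a z"
  unfolding alpha_def using kr by (intro cINF_lower) (auto intro!: bdd_belowI[where m=0])

lemma br_unique: assumes "a \<in> A" "a' \<in> A" "br P A a u" "br P A a' u" shows "a = a'"
proof (rule ccontr)
  have key: "sum (alpha P A) {b\<in>A. b \<le> x} \<le> sum (alpha P A) {b\<in>A. b < y}" if "x < y" for x y
    by (rule sum_mono2) (use that alpha_nonneg in auto)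
  assume "a \<noteq> a'"
  then have "a < a' \<or> a' < a" by auto
  then show False using key[of a a'] key[of a' a] assms(3,4) unfolding br_def by auto
qed

lemma yvf_Some: "yvf P A u = Some b \<longleftrightarrow> b \<in> A \<and> br P A b u"
proof
  assume h: "yvf P A u = Some b"
  then obtain a where a: "a \<in> A" "br P A a u" unfolding yvf_def by (auto split: if_splits)
  have u: "\<exists>!a. a \<in> A \<and> br P A a u" using a br_unique by blast
  from h a have "b = (THE a. a \<in> A \<and> br P A a u)" unfolding yvf_def by (auto split: if_splits)
  then show "b \<in> A \<and> br P A b u" using theI'[OF u] by simp
next
  assume h: "b \<in> A \<and> br P A b u"
  have u: "\<exists>!a. a \<in> A \<and> br P A a u" using h br_unique by blast
  have "(THE a. a \<in> A \<and> br P A a u) = b" using h u by (intro the1_equality) auto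
  then show "yvf P A u = Some b" using h unfolding yvf_def by auto
qed

lemma yvf_None: "yvf P A u = None \<longleftrightarrow> \<not> (\<exists>a\<in>A. br P A a u)"
  unfolding yvf_def by auto

lemma yvf_meas: "yvf P A \<in> borel \<rightarrow>\<^sub>M count_space UNIV"
proof (subst measurable_count_space_eq2_countable, safe)
  fix y :: "nat option"
  show "yvf P A -` {y} \<inter> space borel \<in> sets borel"
  proof (cases y)
    case None
    have "yvf P A -` {y} \<inter> space borel = {u. \<forall>a\<in>A. \<not> br P A a u}" using None yvf_None by auto
    also have "\<dots> \<in> sets borel" unfolding br_def by measurable
    finally show ?thesis .
  next
    case (Some b)
    have "yvf P A -` {y} \<inter> space borel = {u. b \<in> A \<and> br P A b u}" using Some yvf_Some by auto
    also have "\<dots> \<in> sets borel" unfolding br_def by measurable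
    finally show ?thesis .
  qed
qed auto


lemma c_tau_prop: assumes "x \<in> Pasts A" shows "c_tau \<tau> x \<in> \<tau> \<and> ctx_suffix (c_tau \<tau> x) (Infc x)"
proof -
  have "\<exists>!c. c \<in> \<tau> \<and> ctx_suffix c (Infc x)" using ct assms unfolding context_tree_def by blast
  then show ?thesis unfolding c_tau_def by (rule theI')
qed

lemma c_tau_eq: assumes "x \<in> Pasts A" "c \<in> \<tau>" "ctx_suffix c (Infc x)" shows "c_tau \<tau> x = c"
proof -
  have "\<exists>!c. c \<in> \<tau> \<and> ctx_suffix c (Infc x)" using ct assms unfolding context_tree_def by blast
  then show ?thesis unfolding c_tau_def using assms by (intro the1_equality) auto
qed

lemma cyl: assumes "x \<in> Pasts A" "x' \<in> Pasts A" "ctx_len (c_tau \<tau> x) \<le> enat n" "\<forall>j<n. x j = x' j"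
  shows "c_tau \<tau> x' = c_tau \<tau> x"
proof -
  obtain v where v: "c_tau \<tau> x = Fin v" using assms(3) by (cases "c_tau \<tau> x") auto
  have ln: "length v \<le> n" using assms(3) v by simp
  have "c_tau \<tau> x \<in> \<tau>" "ctx_suffix (c_tau \<tau> x) (Infc x)" using c_tau_prop[OF assms(1)] by auto
  then have "Fin v \<in> \<tau>" "\<forall>j<length v. x j = v ! j" using v by auto
  then have "ctx_suffix (Fin v) (Infc x')" using assms(4) ln by auto
  then show ?thesis using c_tau_eq[OF assms(2) \<open>Fin v \<in> \<tau>\<close>] v by simp
qed

definition fillp :: "(real \<Rightarrow> nat option) \<Rightarrow> (nat \<Rightarrow> real) \<Rightarrow> (nat \<Rightarrow> nat) \<Rightarrow> past" where
  "fillp y s a = (\<lambda>j. case y (s j) of Some b \<Rightarrow> b | None \<Rightarrow> a j)"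

lemma fillp_Pasts: "\<forall>j. a j \<in> A \<Longrightarrow> fillp (yvf P A) s a \<in> Pasts A"
  unfolding Pasts_def fillp_def by (auto split: option.split simp: yvf_Some)

definition Ffun :: "(nat \<Rightarrow> real) \<Rightarrow> enat" where
  "Ffun s = (SUP a\<in>{a. \<forall>j. a j \<in> A}. ctx_len (c_tau \<tau> (fillp (yvf P A) s a)))"

definition cons :: "nat \<Rightarrow> nat list \<Rightarrow> (nat \<Rightarrow> real) \<Rightarrow> bool" where
  "cons n u s \<longleftrightarrow> (\<forall>j<n. yvf P A (s j) = None \<or> yvf P A (s j) = Some (u ! j))"

definition Unb :: "nat \<Rightarrow> nat list set" where
  "Unb n = {u. length u = n \<and> set u \<subseteq> A \<and> \<not> ctx_len (c_tau \<tau> (cat u (\<lambda>_. 1))) \<le> enat n}"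

definition Qf :: "nat \<Rightarrow> (nat \<Rightarrow> real) \<Rightarrow> bool" where
  "Qf n s \<longleftrightarrow> (\<forall>u\<in>Unb n. \<not> cons n u s)"

lemma cat_Pasts: "set u \<subseteq> A \<Longrightarrow> cat u (\<lambda>_. 1) \<in> Pasts A"
  unfolding Pasts_def cat_def using A1 by auto

lemma F_le: "Ffun s \<le> enat n \<longleftrightarrow> Qf n s"
proof
  assume F: "Ffun s \<le> enat n"
  show "Qf n s" unfolding Qf_def
  proof (intro ballI notI)
    fix u assume u: "u \<in> Unb n" and c: "cons n u s"
    define a where "a = (\<lambda>j. if j < n then u ! j else 1)"
    have aA: "\<forall>j. a j \<in> A" using u A1 unfolding a_def Unb_def by (auto simp: subset_iff)
    let ?x = "fillp (yvf P A) s a"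
    have "ctx_len (c_tau \<tau> ?x) \<le> Ffun s" unfolding Ffun_def using aA by (intro SUP_upper) auto
    with F have le: "ctx_len (c_tau \<tau> ?x) \<le> enat n" by simp
    have eq: "\<forall>j<n. ?x j = cat u (\<lambda>_. 1) j"
      using c u unfolding cons_def fillp_def cat_def a_def Unb_def by (auto split: option.split)
    have "c_tau \<tau> (cat u (\<lambda>_. 1)) = c_tau \<tau> ?x"
      by (rule cyl[OF fillp_Pasts[OF aA] cat_Pasts le eq]) (use u in \<open>auto simp: Unb_def\<close>)
    with le u show False unfolding Unb_def by simp
  qed
next
  assume Q: "Qf n s"
  show "Ffun s \<le> enat n" unfolding Ffun_def
  proof (rule SUP_least)
    fix a :: "nat \<Rightarrow> nat" assume "a \<in> {a. \<forall>j. a j \<in> A}"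
    then have aA: "\<forall>j. a j \<in> A" by simp
    let ?x = "fillp (yvf P A) s a"
    have xP: "?x \<in> Pasts A" by (rule fillp_Pasts[OF aA])
    define u where "u = map ?x [0..<n]"
    have uA: "set u \<subseteq> A" using xP unfolding u_def Pasts_def by auto
    have "cons n u s" unfolding cons_def u_def fillp_def by (auto split: option.split)
    with Q have "u \<notin> Unb n" unfolding Qf_def by auto
    then have le: "ctx_len (c_tau \<tau> (cat u (\<lambda>_. 1))) \<le> enat n" using uA unfolding Unb_def u_def by auto
    have eq: "\<forall>j<n. cat u (\<lambda>_. 1) j = ?x j" unfolding cat_def u_def by auto
    have "c_tau \<tau> ?x = c_tau \<tau> (cat u (\<lambda>_. 1))" by (rule cyl[OF cat_Pasts[OF uA] xP le eq])
    with le show "ctx_len (c_tau \<tau> ?x) \<le> enat n" by simp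
  qed
qed

lemma Qf_cong: "\<forall>k<n. s k = s' k \<Longrightarrow> Qf n s = Qf n s'"
  unfolding Qf_def cons_def by auto

lemma countable_Unb: "countable (Unb n)" by (rule countable_subset[of _ UNIV]) auto

lemma Qf_meas:
  assumes g: "\<And>k. (\<lambda>x. g x k) \<in> borel_measurable N"
  shows "Measurable.pred N (\<lambda>x. Qf n (g x))"
proof -
  have [measurable]: "(\<lambda>x. yvf P A (g x k)) \<in> N \<rightarrow>\<^sub>M count_space UNIV" for k
    using measurable_compose[OF g yvf_meas] .
  show ?thesis unfolding Qf_def cons_def
    by (intro pred_intros_countable_bounded countable_Unb) measurable
qed

lemma F_meas:
  assumes g: "\<And>k. (\<lambda>x. g x k) \<in> borel_measurable N"
  shows "(\<lambda>x. Ffun (g x)) \<in> N \<rightarrow>\<^sub>M count_space UNIV"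
proof (subst measurable_count_space_eq2_countable, safe)
  fix e :: enat
  note Q = Qf_meas[OF g]
  show "(\<lambda>x. Ffun (g x)) -` {e} \<inter> space N \<in> sets N"
  proof (cases e)
    case (enat n)
    have "(\<lambda>x. Ffun (g x)) -` {e} \<inter> space N = {x \<in> space N. Qf n (g x) \<and> (n = 0 \<or> \<not> Qf (n - 1) (g x))}"
    proof -
      have "Ffun (g x) = enat n \<longleftrightarrow> Ffun (g x) \<le> enat n \<and> (n = 0 \<or> \<not> Ffun (g x) \<le> enat (n - 1))" for x
        by (cases "Ffun (g x)") auto
      then show ?thesis using enat by (auto simp: F_le)
    qed
    also have "\<dots> \<in> sets N" using Q by measurable
    finally show ?thesis .
  next
    case infinity
    have "(\<lambda>x. Ffun (g x)) -` {e} \<inter> space N = {x \<in> space N. \<forall>n. \<not> Qf n (g x)}"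
    proof -
      have "Ffun (g x) = \<infinity> \<longleftrightarrow> (\<forall>n. \<not> Ffun (g x) \<le> enat n)" for x
        by (cases "Ffun (g x)") auto
      then show ?thesis using infinity by (auto simp: F_le)
    qed
    also have "\<dots> \<in> sets N" using Q by measurable
    finally show ?thesis .
  qed
qed auto


lemma cn_eq: "cn P A \<tau> U n \<omega> = Ffun (\<lambda>k. U (n - int k) \<omega>)"
proof -
  let ?g = "\<lambda>(a::int \<Rightarrow> nat) k. a (n - int k)"
  have img: "?g ` {a. \<forall>i. a i \<in> A} = {a. \<forall>j. a j \<in> A}"
  proof (safe)
    fix a' :: "nat \<Rightarrow> nat" assume h: "\<forall>j. a' j \<in> A"
    let ?a = "\<lambda>i. a' (nat (n - i))"
    have "a' = ?g ?a" by auto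
    moreover have "?a \<in> {a. \<forall>i. a i \<in> A}" using h by auto
    ultimately show "a' \<in> ?g ` {a. \<forall>i. a i \<in> A}" by (rule image_eqI)
  qed auto
  have eq: "(\<lambda>j. Yfill P A U (n - int j) a \<omega>) = fillp (yvf P A) (\<lambda>k. U (n - int k) \<omega>) (?g a)" for a
    by (auto simp: Yfill_def fillp_def Yv_eq)
  have "cn P A \<tau> U n \<omega> = (SUP a\<in>{a. \<forall>i. a i \<in> A}. ctx_len (c_tau \<tau> (fillp (yvf P A) (\<lambda>k. U (n - int k) \<omega>) (?g a))))"
    unfolding cn_def eq ..
  also have "\<dots> = (SUP a'\<in>?g ` {a. \<forall>i. a i \<in> A}. ctx_len (c_tau \<tau> (fillp (yvf P A) (\<lambda>k. U (n - int k) \<omega>) a')))"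
    by (simp add: image_image)
  also have "\<dots> = Ffun (\<lambda>k. U (n - int k) \<omega>)" unfolding img Ffun_def ..
  finally show ?thesis .
qed

definition Ep :: "nat \<Rightarrow> (int \<Rightarrow> real) \<Rightarrow> bool" where
  "Ep m r \<longleftrightarrow> (\<forall>i. - int m < i \<and> i \<le> 0 \<longrightarrow>
     \<not> (\<forall>j\<in>{i..0}. yvf P A (r j) \<noteq> None \<or> Qf (nat (j - i)) (\<lambda>k. r (j - int k))))"

lemma theta_le_iff: "theta_bar P A \<tau> U 0 \<omega> \<le> ereal (- real m) \<longleftrightarrow> Ep m (\<lambda>j. U j \<omega>)"
proof -
  have "theta_bar P A \<tau> U 0 \<omega> \<le> ereal (- real m) \<longleftrightarrow>
    (\<forall>i. i \<le> 0 \<and> (\<forall>j\<in>{i..0}. Yv P A U j \<omega> \<noteq> None \<or> cn P A \<tau> U j \<omega> \<le> enat (nat (j - i))) \<longrightarrow> i \<le> - int m)"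
    unfolding theta_bar_def Sup_le_iff by auto
  also have "\<dots> \<longleftrightarrow> Ep m (\<lambda>j. U j \<omega>)"
    unfolding Ep_def Yv_eq cn_eq F_le by (auto simp del: not_None_eq simp: not_le)
  finally show ?thesis .
qed

lemma theta_le0: "theta_bar P A \<tau> U 0 \<omega> \<le> 0"
  unfolding theta_bar_def by (auto intro!: Sup_least)

lemma Ep_restrict: "Ep m (restrict r {- int m + 1..0}) = Ep m r"
proof -
  have "(\<forall>j\<in>{i..0}. yvf P A (restrict r {- int m + 1..0} j) \<noteq> None \<or> Qf (nat (j - i)) (\<lambda>k. restrict r {- int m + 1..0} (j - int k)))
    = (\<forall>j\<in>{i..0}. yvf P A (r j) \<noteq> None \<or> Qf (nat (j - i)) (\<lambda>k. r (j - int k)))" if "- int m < i" "i \<le> 0" for i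
  proof -
    have "Qf (nat (j - i)) (\<lambda>k. restrict r {- int m + 1..0} (j - int k)) = Qf (nat (j - i)) (\<lambda>k. r (j - int k))"
      if "j \<in> {i..0}" for j
      by (rule Qf_cong) (use that \<open>- int m < i\<close> in auto)
    then show ?thesis using that by auto
  qed
  then show ?thesis unfolding Ep_def by auto
qed

lemma comp_meas: "(\<lambda>r. r j) \<in> borel_measurable (PiM J (\<lambda>_. borel :: real measure))"
proof (cases "j \<in> J")
  case True then show ?thesis by measurable
next
  case False
  have "(\<lambda>r. undefined) \<in> borel_measurable (PiM J (\<lambda>_. borel :: real measure))" by simp
  then show ?thesis
    by (rule measurable_cong[THEN iffD1, rotated]) (use False in \<open>auto simp: space_PiM PiE_def extensional_def\<close>)
qed

lemma Ep_meas:
  assumes g: "\<And>k. (\<lambda>x. g x k) \<in> borel_measurable N"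
  shows "Measurable.pred N (\<lambda>x. Ep m (g x))"
proof -
  have [measurable]: "(\<lambda>x. yvf P A (g x k)) \<in> N \<rightarrow>\<^sub>M count_space UNIV" for k
    using measurable_compose[OF g yvf_meas] .
  have [measurable]: "Measurable.pred N (\<lambda>x. Qf n (\<lambda>k. g x (j - int k)))" for n j
    by (rule Qf_meas) (rule g)
  show ?thesis unfolding Ep_def by measurable
qed

definition zf :: "enat \<Rightarrow> real \<Rightarrow> enat" where
  "zf e u = (if u < alpha_m1 P A then 0
      else if \<exists>k::nat. alpha_ki P A \<tau> e (int k - 1) \<le> u \<and> u < alpha_ki P A \<tau> e (int k)
      then enat (LEAST k::nat. alpha_ki P A \<tau> e (int k - 1) \<le> u \<and> u < alpha_ki P A \<tau> e (int k))
      else \<infinity>)"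

lemma zeta_eq: "zeta P A \<tau> U l \<omega> = zf (cn P A \<tau> U (l - 1) \<omega>) (U l \<omega>)"
  unfolding zeta_def zf_def ..

lemma zf_le_iff: "zf e u \<le> enat i \<longleftrightarrow> u < alpha_m1 P A \<or>
   (\<exists>k\<le>i. alpha_ki P A \<tau> e (int k - 1) \<le> u \<and> u < alpha_ki P A \<tau> e (int k))"
proof -
  let ?c = "\<lambda>k::nat. alpha_ki P A \<tau> e (int k - 1) \<le> u \<and> u < alpha_ki P A \<tau> e (int k)"
  show ?thesis
  proof (cases "u < alpha_m1 P A")
    case True then show ?thesis by (simp add: zf_def)
  next
    case False
    show ?thesis
    proof (cases "\<exists>k. ?c k")
      case True
      then have l: "?c (LEAST k. ?c k)" by (rule LeastI_ex)
      have "(LEAST k. ?c k) \<le> i \<longleftrightarrow> (\<exists>k\<le>i. ?c k)"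
        using l by (auto intro: Least_le order.trans)
      then show ?thesis using False True by (simp add: zf_def)
    next
      case c: False
      then show ?thesis using False by (auto simp add: zf_def)
    qed
  qed
qed

lemma zf_gt: assumes "\<not> zf e u \<le> enat i" shows "alpha_ki P A \<tau> e (int i) \<le> u"
proof (rule ccontr)
  assume "\<not> alpha_ki P A \<tau> e (int i) \<le> u"
  then have ui: "u < alpha_ki P A \<tau> e (int i)" by simp
  have nm: "\<not> u < alpha_m1 P A" using assms zf_le_iff by auto
  let ?q = "\<lambda>k::nat. u < alpha_ki P A \<tau> e (int k)"
  define k0 where "k0 = (LEAST k. ?q k)"
  have q0: "?q k0" unfolding k0_def using ui by (rule LeastI)
  have k0i: "k0 \<le> i" unfolding k0_def using ui by (rule Least_le)
  have "alpha_ki P A \<tau> e (int k0 - 1) \<le> u"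
  proof (cases k0)
    case 0 then show ?thesis using nm by (simp add: alpha_ki_def)
  next
    case (Suc k1)
    have "\<not> ?q k1" unfolding k0_def using Suc by (intro not_less_Least) (simp add: k0_def)
    then show ?thesis using Suc by simp
  qed
  then have "zf e u \<le> enat i" unfolding zf_le_iff using q0 k0i by blast
  with assms show False by simp
qed

lemma zf_pred_meas:
  assumes g: "g \<in> borel_measurable N" and h: "h \<in> N \<rightarrow>\<^sub>M count_space UNIV"
  shows "Measurable.pred N (\<lambda>x. zf (h x) (g x) \<le> enat i)"
proof -
  have "Measurable.pred N (\<lambda>x. g x < alpha_m1 P A \<or>
     (\<exists>k\<le>i. alpha_ki P A \<tau> e (int k - 1) \<le> g x \<and> g x < alpha_ki P A \<tau> e (int k)))" for e
    using g by measurable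
  then have "Measurable.pred N (\<lambda>x. zf e (g x) \<le> enat i)" for e by (simp add: zf_le_iff)
  then show ?thesis by (rule measurable_compose_countable[OF _ h])
qed

lemma block0: "block P A \<tau> U 0 \<omega> = {l. theta_bar P A \<tau> U 0 \<omega> \<le> ereal (real_of_int l) \<and> l \<le> 0}"
  unfolding block_def by (simp add: one_ereal_def)

lemma L_le_iff: "Lk P A \<tau> U 0 \<omega> \<le> enat i \<longleftrightarrow>
   (\<forall>m::nat. theta_bar P A \<tau> U 0 \<omega> \<le> ereal (- real m) \<longrightarrow> zeta P A \<tau> U (- int m) \<omega> \<le> enat i)"
  (is "_ \<longleftrightarrow> ?R")
proof -
  have "Lk P A \<tau> U 0 \<omega> \<le> enat i \<longleftrightarrow> (\<forall>l. theta_bar P A \<tau> U 0 \<omega> \<le> ereal (real_of_int l) \<and> l \<le> 0 \<longrightarrow> zeta P A \<tau> U l \<omega> \<le> enat i)"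
    unfolding Lk_def block0 SUP_le_iff by auto
  also have "\<dots> \<longleftrightarrow> ?R"
  proof safe
    fix m :: nat
    assume "\<forall>l. theta_bar P A \<tau> U 0 \<omega> \<le> ereal (real_of_int l) \<and> l \<le> 0 \<longrightarrow> zeta P A \<tau> U l \<omega> \<le> enat i"
      "theta_bar P A \<tau> U 0 \<omega> \<le> ereal (- real m)"
    then show "zeta P A \<tau> U (- int m) \<omega> \<le> enat i" by (erule_tac allE[where x="- int m"]) simp
  next
    fix l :: int
    assume "\<forall>m::nat. theta_bar P A \<tau> U 0 \<omega> \<le> ereal (- real m) \<longrightarrow> zeta P A \<tau> U (- int m) \<omega> \<le> enat i"
      "theta_bar P A \<tau> U 0 \<omega> \<le> ereal (real_of_int l)" "l \<le> 0"
    then show "zeta P A \<tau> U l \<omega> \<le> enat i" by (erule_tac allE[where x="nat (- l)"]) simp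
  qed
  finally show ?thesis .
qed

end

locale setting = prob_space M for M :: "'w measure" +
  fixes P :: "nat \<Rightarrow> past \<Rightarrow> real" and A :: "nat set" and \<tau> :: "ctx set" and U :: "int \<Rightarrow> 'w \<Rightarrow> real"
  assumes A1: "1 \<in> A"
    and kr: "\<forall>z\<in>Pasts A. \<forall>a\<in>A. 0 \<le> P a z \<and> P a z \<le> 1"
    and ks: "\<forall>z\<in>Pasts A. ((\<lambda>a. P a z) has_sum 1) A"
    and ct: "context_tree A \<tau>"
    and indep: "indep_vars (\<lambda>_. borel) U UNIV"
    and unif: "\<forall>j. distr M borel (U j) = uniform_measure lborel {0..<1::real}"
begin

lemmas F_le' = F_le[OF A1 kr ct]
lemmas theta_le_iff' = theta_le_iff[OF A1 kr ct]
lemmas Ep_restrict' = Ep_restrict[OF A1 kr ct]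
lemmas Ep_meas' = Ep_meas[OF A1 kr ct]
lemmas F_meas' = F_meas[OF A1 kr ct]
lemmas zf_gt' = zf_gt[OF A1 kr ct]
lemmas zf_pred_meas' = zf_pred_meas[OF A1 kr ct]
lemmas cn_eq' = cn_eq[OF A1 kr ct]
lemmas L_le_iff' = L_le_iff[OF A1 kr ct]
lemmas zeta_eq' = zeta_eq[OF A1 kr ct]
lemmas alpha_nonneg' = alpha_nonneg[OF A1 kr ct]
lemmas alpha_le' = alpha_le[OF A1 kr ct]
lemmas Ep_def' = Ep_def[OF A1 kr ct]
lemmas zf_def' = zf_def[OF A1 kr ct]

lemma Umeas[measurable]: "U j \<in> borel_measurable M"
  using indep unfolding indep_vars_def by auto

lemma cn_meas[measurable]: "(\<lambda>\<omega>. cn P A \<tau> U n \<omega>) \<in> M \<rightarrow>\<^sub>M count_space UNIV"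
  unfolding cn_eq' by (rule F_meas') simp

lemma Ep_pred[measurable]: "Measurable.pred M (\<lambda>\<omega>. Ep P A \<tau> m (\<lambda>j. U j \<omega>))"
  by (rule Ep_meas') simp

lemma zeta_pred[measurable]: "Measurable.pred M (\<lambda>\<omega>. zeta P A \<tau> U l \<omega> \<le> enat i)"
  unfolding zeta_eq' by (rule zf_pred_meas') measurable

lemma L_pred[measurable]: "Measurable.pred M (\<lambda>\<omega>. Lk P A \<tau> U 0 \<omega> \<le> enat i)"
  unfolding L_le_iff' theta_le_iff' by measurable

lemma z0: "(\<lambda>_. 1) \<in> Pasts A" using A1 by (simp add: Pasts_def)

lemma alpha_summable: "alpha P A summable_on A"
proof (rule summable_on_comparison_test)
  show "(\<lambda>a. P a (\<lambda>_. 1)) summable_on A" using ks z0 unfolding summable_on_def by blast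
qed (use alpha_le' z0 alpha_nonneg' in auto)

lemma am1_bounds: "0 \<le> alpha_m1 P A" "alpha_m1 P A \<le> 1"
proof -
  show "0 \<le> alpha_m1 P A" unfolding alpha_m1_def by (rule infsum_nonneg) (rule alpha_nonneg')
  have "alpha_m1 P A \<le> infsum (\<lambda>a. P a (\<lambda>_. 1)) A" unfolding alpha_m1_def
    by (rule infsum_mono[OF alpha_summable]) (use ks z0 alpha_le' in \<open>auto simp: summable_on_def\<close>)
  also have "\<dots> = 1" using ks z0 by (auto intro: infsumI)
  finally show "alpha_m1 P A \<le> 1" .
qed

lemma bracket: assumes u0: "0 \<le> u" and ua: "u < alpha_m1 P A" shows "\<exists>a\<in>A. br P A a u"
proof -
  let ?S = "\<lambda>a. sum (alpha P A) {b\<in>A. b \<le> a}"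
  have sup: "alpha_m1 P A = (SUP F\<in>{F. finite F \<and> F \<subseteq> A}. sum (alpha P A) F)"
    unfolding alpha_m1_def by (rule infsum_nonneg_is_SUPREMUM_real[OF alpha_summable alpha_nonneg'])
  have "\<exists>F. finite F \<and> F \<subseteq> A \<and> u < sum (alpha P A) F"
  proof (rule ccontr)
    assume "\<not> ?thesis"
    then have "(SUP F\<in>{F. finite F \<and> F \<subseteq> A}. sum (alpha P A) F) \<le> u"
      by (intro cSUP_least) (auto simp: not_less)
    with sup ua show False by simp
  qed
  then obtain F where F: "finite F" "F \<subseteq> A" "u < sum (alpha P A) F" by blast
  have Fne: "F \<noteq> {}" using F u0 by auto
  define N where "N = Max F"
  have NA: "N \<in> A" using F Fne unfolding N_def using Max_in by blast
  have "sum (alpha P A) F \<le> ?S N"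
    by (rule sum_mono2) (use F Fne alpha_nonneg' in \<open>auto simp: N_def\<close>)
  then have ex: "N \<in> A \<and> u < ?S N" using F NA by simp
  define a0 where "a0 = (LEAST a. a \<in> A \<and> u < ?S a)"
  have a0: "a0 \<in> A \<and> u < ?S a0" unfolding a0_def using ex by (rule LeastI)
  have "sum (alpha P A) {b\<in>A. b < a0} \<le> u"
  proof (cases "{b\<in>A. b < a0} = {}")
    case True then show ?thesis using u0 by (simp only: True sum.empty)
  next
    case False
    define b' where "b' = Max {b\<in>A. b < a0}"
    have fin: "finite {b\<in>A. b < a0}" by simp
    have b': "b' \<in> A" "b' < a0" using Max_in[OF fin False] unfolding b'_def by auto
    have eq: "{b\<in>A. b < a0} = {b\<in>A. b \<le> b'}"
      using Max_ge[OF fin] b' unfolding b'_def by fastforce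
    have "\<not> (b' \<in> A \<and> u < ?S b')" unfolding a0_def using b' by (intro not_less_Least) (simp add: a0_def)
    then show ?thesis using eq b' by simp
  qed
  then show ?thesis using a0 unfolding br_def by blast
qed

lemma unif_prob: assumes "0 \<le> c" "c \<le> 1"
  shows "prob {\<omega>\<in>space M. 0 \<le> U j \<omega> \<and> U j \<omega> < c} = c"
proof -
  have "prob {\<omega>\<in>space M. 0 \<le> U j \<omega> \<and> U j \<omega> < c} = measure (distr M borel (U j)) {0..<c}"
    by (subst measure_distr) (auto intro!: arg_cong[where f=prob])
  also have "\<dots> = measure (uniform_measure lborel {0..<1::real}) {0..<c}" using unif by simp
  also have "\<dots> = c"
    using assms unfolding measure_def by (simp add: Int_absorb2 divide_ennreal_def)
  finally show ?thesis .
qed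

lemma part2: "alpha_m1 P A \<le> prob {\<omega>\<in>space M. Lk P A \<tau> U 0 \<omega> \<le> enat i}"
proof -
  have sub: "{\<omega>\<in>space M. 0 \<le> U 0 \<omega> \<and> U 0 \<omega> < alpha_m1 P A} \<subseteq> {\<omega>\<in>space M. Lk P A \<tau> U 0 \<omega> \<le> enat i}"
  proof safe
    fix \<omega> assume \<omega>: "\<omega> \<in> space M" "0 \<le> U 0 \<omega>" "U 0 \<omega> < alpha_m1 P A"
    have ne: "yvf P A (U 0 \<omega>) \<noteq> None" using bracket[OF \<omega>(2,3)] unfolding yvf_None[OF A1 kr ct] by simp
    show "Lk P A \<tau> U 0 \<omega> \<le> enat i" unfolding L_le_iff'
    proof (intro allI impI)
      fix m :: nat assume "theta_bar P A \<tau> U 0 \<omega> \<le> ereal (- real m)"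
      then have "Ep P A \<tau> m (\<lambda>j. U j \<omega>)" unfolding theta_le_iff' .
      then have Ep: "\<forall>i. - int m < i \<and> i \<le> 0 \<longrightarrow> \<not> (\<forall>j\<in>{i..0}. yvf P A (U j \<omega>) \<noteq> None \<or> Qf P A \<tau> (nat (j - i)) (\<lambda>k. U (j - int k) \<omega>))"
        unfolding Ep_def' .
      have "m = 0"
      proof (rule ccontr)
        assume "m \<noteq> 0"
        then have "\<not> (\<forall>j\<in>{0..(0::int)}. yvf P A (U j \<omega>) \<noteq> None \<or> Qf P A \<tau> (nat (j - 0)) (\<lambda>k. U (j - int k) \<omega>))"
          using Ep[rule_format, of 0] by simp
        with ne show False by simp
      qed
      then show "zeta P A \<tau> U (- int m) \<omega> \<le> enat i" using \<omega> by (simp add: zeta_eq' zf_def')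
    qed
  qed
  have "alpha_m1 P A = prob {\<omega>\<in>space M. 0 \<le> U 0 \<omega> \<and> U 0 \<omega> < alpha_m1 P A}"
    by (rule unif_prob[symmetric]) (use am1_bounds in auto)
  also have "\<dots> \<le> prob {\<omega>\<in>space M. Lk P A \<tau> U 0 \<omega> \<le> enat i}"
    by (rule finite_measure_mono[OF sub]) measurable
  finally show ?thesis .
qed


definition Zp :: "nat \<Rightarrow> nat \<Rightarrow> (int \<Rightarrow> real) \<Rightarrow> bool" where
  "Zp i m r \<longleftrightarrow> alpha_ki P A \<tau> (Ffun P A \<tau> (\<lambda>k. r (- int m - 1 - int k))) (int i) \<le> r (- int m)"

lemma Zp_meas:
  assumes g: "\<And>k. (\<lambda>x. g x k) \<in> borel_measurable N"
  shows "Measurable.pred N (\<lambda>x. Zp i m (g x))"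
proof -
  have h: "(\<lambda>x. Ffun P A \<tau> (\<lambda>k. g x (- int m - 1 - int k))) \<in> N \<rightarrow>\<^sub>M count_space UNIV"
    by (rule F_meas') (rule g)
  have "Measurable.pred N (\<lambda>x. alpha_ki P A \<tau> e (int i) \<le> g x (- int m))" for e
    using g by measurable
  then show ?thesis unfolding Zp_def by (rule measurable_compose_countable[OF _ h])
qed

lemma Zp_restrict: "Zp i m (restrict r {..- int m}) = Zp i m r"
proof -
  have "(\<lambda>k. restrict r {..- int m} (- int m - 1 - int k)) = (\<lambda>k. r (- int m - 1 - int k))" by auto
  then show ?thesis unfolding Zp_def by simp
qed

lemma indep_EZ:
  "prob ({\<omega>\<in>space M. Ep P A \<tau> m (\<lambda>j. U j \<omega>)} \<inter> {\<omega>\<in>space M. Zp i m (\<lambda>j. U j \<omega>)}) =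
   prob {\<omega>\<in>space M. Ep P A \<tau> m (\<lambda>j. U j \<omega>)} * prob {\<omega>\<in>space M. Zp i m (\<lambda>j. U j \<omega>)}"
proof -
  define J1 where "J1 = {- int m + 1..0}"
  define J2 where "J2 = {..- int m}"
  define K where "K = (\<lambda>b. if b then J1 else J2)"
  have ind: "indep_vars (\<lambda>b. PiM (K b) (\<lambda>_. borel :: real measure)) (\<lambda>b \<omega>. restrict (\<lambda>j. U j \<omega>) (K b)) UNIV"
    by (rule indep_vars_restrict[OF indep]) (auto simp: disjoint_family_on_def K_def J1_def J2_def)
  have e1: "(\<lambda>b. PiM (K b) (\<lambda>_. borel :: real measure)) = case_bool (PiM J1 (\<lambda>_. borel)) (PiM J2 (\<lambda>_. borel))"
    by (rule ext) (simp add: K_def split: bool.split)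
  have e2: "(\<lambda>b \<omega>. restrict (\<lambda>j. U j \<omega>) (K b)) = case_bool (\<lambda>\<omega>. restrict (\<lambda>j. U j \<omega>) J1) (\<lambda>\<omega>. restrict (\<lambda>j. U j \<omega>) J2)"
    by (rule ext) (simp add: K_def split: bool.split)
  have iv: "indep_var (PiM J1 (\<lambda>_. borel :: real measure)) (\<lambda>\<omega>. restrict (\<lambda>j. U j \<omega>) J1)
      (PiM J2 (\<lambda>_. borel :: real measure)) (\<lambda>\<omega>. restrict (\<lambda>j. U j \<omega>) J2)"
    using ind unfolding indep_var_def e1 e2 .
  define Xa where "Xa = {r \<in> space (PiM J1 (\<lambda>_. borel :: real measure)). Ep P A \<tau> m r}"
  define Xb where "Xb = {r \<in> space (PiM J2 (\<lambda>_. borel :: real measure)). Zp i m r}"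
  have Xa: "Xa \<in> sets (PiM J1 (\<lambda>_. borel))" unfolding Xa_def
    by (rule Ep_meas'[THEN predE]) (rule comp_meas[OF A1 kr ct])
  have Xb: "Xb \<in> sets (PiM J2 (\<lambda>_. borel))" unfolding Xb_def
    by (rule Zp_meas[THEN predE]) (rule comp_meas[OF A1 kr ct])
  have sp: "restrict f J \<in> space (PiM J (\<lambda>_. borel :: real measure))" for f :: "int \<Rightarrow> real" and J
    by (simp add: space_PiM)
  have s1: "(\<lambda>\<omega>. restrict (\<lambda>j. U j \<omega>) J1) -` Xa \<inter> space M = {\<omega>\<in>space M. Ep P A \<tau> m (\<lambda>j. U j \<omega>)}"
    unfolding Xa_def J1_def using Ep_restrict' sp by auto
  have s2: "(\<lambda>\<omega>. restrict (\<lambda>j. U j \<omega>) J2) -` Xb \<inter> space M = {\<omega>\<in>space M. Zp i m (\<lambda>j. U j \<omega>)}"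
    unfolding Xb_def J2_def using Zp_restrict sp by auto
  have s3: "(\<lambda>\<omega>. (restrict (\<lambda>j. U j \<omega>) J1, restrict (\<lambda>j. U j \<omega>) J2)) -` (Xa \<times> Xb) \<inter> space M =
     {\<omega>\<in>space M. Ep P A \<tau> m (\<lambda>j. U j \<omega>)} \<inter> {\<omega>\<in>space M. Zp i m (\<lambda>j. U j \<omega>)}"
    using s1 s2 by auto
  show ?thesis using indep_varD[OF iv Xa Xb] unfolding s1 s2 s3 .
qed


abbreviation "unif \<equiv> uniform_measure lborel {0..<1::real}"

lemma unif_prob_space: "prob_space unif"
  by (rule prob_space_uniform_measure) auto

lemma sets_unif: "sets unif = sets (borel :: real measure)" by simp

lemma sets_PiU: "sets (PiM I (\<lambda>_. unif)) = sets (PiM I (\<lambda>_. borel :: real measure))"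
  by (rule sets_PiM_cong) auto

lemma distr_W: "distr M (PiM UNIV (\<lambda>_::int. unif)) (\<lambda>\<omega> j. U j \<omega>) = PiM UNIV (\<lambda>_::int. unif)"
proof -
  have "distr M (PiM UNIV (\<lambda>_::int. borel)) (\<lambda>x. \<lambda>i\<in>UNIV. U i x) = PiM UNIV (\<lambda>i. distr M borel (U i))"
    using indep_vars_iff_distr_eq_PiM'[where I=UNIV and M'="\<lambda>_. borel" and X=U] indep by auto
  then have "distr M (PiM UNIV (\<lambda>_::int. borel)) (\<lambda>\<omega> j. U j \<omega>) = PiM UNIV (\<lambda>_::int. unif)"
    using unif by (simp add: restrict_UNIV)
  moreover have "distr M (PiM UNIV (\<lambda>_::int. unif)) (\<lambda>\<omega> j. U j \<omega>) = distr M (PiM UNIV (\<lambda>_::int. borel)) (\<lambda>\<omega> j. U j \<omega>)"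
    by (rule distr_cong) (auto simp: sets_PiU)
  ultimately show ?thesis by simp
qed

lemma W_meas: "(\<lambda>\<omega> j. U j \<omega>) \<in> M \<rightarrow>\<^sub>M PiM UNIV (\<lambda>_::int. unif)"
proof -
  have "(\<lambda>\<omega> j. U j \<omega>) \<in> M \<rightarrow>\<^sub>M PiM UNIV (\<lambda>_::int. borel)"
    by (rule measurable_PiM_single') auto
  then show ?thesis using measurable_cong_sets[OF refl sets_PiU] by blast
qed

lemma distr_V: "distr M (PiM UNIV (\<lambda>_::nat. unif)) (\<lambda>\<omega> k. U (- int m - int k) \<omega>) = PiM UNIV (\<lambda>_::nat. unif)"
proof -
  define f where "f = (\<lambda>n::nat. - int m - int n)"
  define R where "R = (\<lambda>\<omega>::int\<Rightarrow>real. \<lambda>n\<in>UNIV. \<omega> (f n))"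
  have inj: "inj_on f UNIV" unfolding f_def by (auto simp: inj_on_def)
  have re: "distr (PiM UNIV (\<lambda>_::int. unif)) (PiM UNIV (\<lambda>i. unif)) R = PiM UNIV (\<lambda>_::nat. unif)"
    unfolding R_def by (rule distr_PiM_reindex[OF unif_prob_space inj]) auto
  have Rm: "R \<in> PiM UNIV (\<lambda>_::int. unif) \<rightarrow>\<^sub>M PiM UNIV (\<lambda>_::nat. unif)"
    unfolding R_def by (rule measurable_PiM_single') (auto intro!: measurable_component_singleton)
  have "distr M (PiM UNIV (\<lambda>_::nat. unif)) (\<lambda>\<omega> k. U (- int m - int k) \<omega>) =
        distr M (PiM UNIV (\<lambda>_::nat. unif)) (R \<circ> (\<lambda>\<omega> j. U j \<omega>))"
    by (rule distr_cong) (auto simp: R_def f_def)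
  also have "\<dots> = distr (distr M (PiM UNIV (\<lambda>_::int. unif)) (\<lambda>\<omega> j. U j \<omega>)) (PiM UNIV (\<lambda>_::nat. unif)) R"
    by (rule distr_distr[symmetric, OF Rm W_meas])
  also have "\<dots> = PiM UNIV (\<lambda>_::nat. unif)" unfolding distr_W re ..
  finally show ?thesis .
qed

definition H :: "nat \<Rightarrow> (nat \<Rightarrow> real) \<Rightarrow> bool" where
  "H i s \<longleftrightarrow> alpha_ki P A \<tau> (Ffun P A \<tau> (\<lambda>k. s (Suc k))) (int i) \<le> s 0"

lemma H_pred: "{s \<in> space (PiM UNIV (\<lambda>_::nat. unif)). H i s} \<in> sets (PiM UNIV (\<lambda>_::nat. unif))"
proof -
  have c: "(\<lambda>s. s k) \<in> borel_measurable (PiM UNIV (\<lambda>_::nat. borel :: real measure))" for k by simp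
  have h: "(\<lambda>s. Ffun P A \<tau> (\<lambda>k. s (Suc k))) \<in> PiM UNIV (\<lambda>_::nat. borel :: real measure) \<rightarrow>\<^sub>M count_space UNIV"
    by (rule F_meas') simp
  have "Measurable.pred (PiM UNIV (\<lambda>_::nat. borel :: real measure)) (\<lambda>s. alpha_ki P A \<tau> e (int i) \<le> s 0)" for e
    by measurable
  then have "Measurable.pred (PiM UNIV (\<lambda>_::nat. borel :: real measure)) (H i)"
    unfolding H_def by (rule measurable_compose_countable[OF _ h])
  then have "{s \<in> space (PiM UNIV (\<lambda>_::nat. borel :: real measure)). H i s} \<in> sets (PiM UNIV (\<lambda>_::nat. borel :: real measure))"
    by (rule predE)
  then show ?thesis using sets_PiU sets_eq_imp_space_eq[OF sets_PiU] by simp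
qed

lemma Zp_H: "Zp i m (\<lambda>j. U j \<omega>) = H i (\<lambda>k. U (- int m - int k) \<omega>)"
proof -
  have "(\<lambda>k. U (- int m - 1 - int k) \<omega>) = (\<lambda>k. U (- int m - int (Suc k)) \<omega>)" by (auto simp: algebra_simps)
  then show ?thesis unfolding Zp_def H_def by simp
qed

lemma Zp_prob: "prob {\<omega>\<in>space M. Zp i m (\<lambda>j. U j \<omega>)} = measure (PiM UNIV (\<lambda>_::nat. unif)) {s \<in> space (PiM UNIV (\<lambda>_::nat. unif)). H i s}"
proof -
  have Vm: "(\<lambda>\<omega> k. U (- int m - int k) \<omega>) \<in> M \<rightarrow>\<^sub>M PiM UNIV (\<lambda>_::nat. unif)"
  proof -
    have "(\<lambda>\<omega> k. U (- int m - int k) \<omega>) \<in> M \<rightarrow>\<^sub>M PiM UNIV (\<lambda>_::nat. borel)"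
      by (rule measurable_PiM_single') auto
    then show ?thesis using measurable_cong_sets[OF refl sets_PiU] by blast
  qed
  have "measure (PiM UNIV (\<lambda>_::nat. unif)) {s \<in> space (PiM UNIV (\<lambda>_::nat. unif)). H i s} =
    measure (distr M (PiM UNIV (\<lambda>_::nat. unif)) (\<lambda>\<omega> k. U (- int m - int k) \<omega>)) {s \<in> space (PiM UNIV (\<lambda>_::nat. unif)). H i s}"
    unfolding distr_V ..
  also have "\<dots> = prob ((\<lambda>\<omega> k. U (- int m - int k) \<omega>) -` {s \<in> space (PiM UNIV (\<lambda>_::nat. unif)). H i s} \<inter> space M)"
    by (rule measure_distr[OF Vm H_pred])
  also have "(\<lambda>\<omega> k. U (- int m - int k) \<omega>) -` {s \<in> space (PiM UNIV (\<lambda>_::nat. unif)). H i s} \<inter> space M =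
     {\<omega>\<in>space M. Zp i m (\<lambda>j. U j \<omega>)}"
    using measurable_space[OF Vm] by (auto simp: Zp_H)
  finally show ?thesis by simp
qed

end

lemma count_le:
  fixes X :: ereal assumes X0: "X \<le> 0"
  shows "(\<Sum>m. if X \<le> ereal (- real (Suc m)) then 1 else 0 :: ennreal) \<le> e2ennreal \<bar>X\<bar>"
proof (cases X)
  case (real t)
  define K where "K = nat \<lfloor>- t\<rfloor>"
  have t0: "t \<le> 0" using X0 real by simp
  have Kt: "real K \<le> - t" unfolding K_def using t0 by simp
  have Kt2: "- t < real K + 1" unfolding K_def using t0 by linarith
  have "(\<Sum>m. if X \<le> ereal (- real (Suc m)) then 1 else 0 :: ennreal) =
      (\<Sum>m\<in>{..<K}. if X \<le> ereal (- real (Suc m)) then 1 else 0 :: ennreal)"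
  proof (rule suminf_finite)
    fix m assume "m \<notin> {..<K}"
    then have "real K \<le> real m" by simp
    then show "(if X \<le> ereal (- real (Suc m)) then 1 else 0 :: ennreal) = 0" using Kt2 real by auto
  qed simp
  also have "\<dots> \<le> (\<Sum>m\<in>{..<K}. 1 :: ennreal)" by (rule sum_mono) auto
  also have "\<dots> = ennreal (real K)" by (simp add: ennreal_of_nat_eq_real_of_nat)
  also have "\<dots> \<le> ennreal (- t)" using Kt by (rule ennreal_leI)
  also have "\<dots> = e2ennreal \<bar>X\<bar>" using real t0 by simp
  finally show ?thesis .
next
  case PInf then show ?thesis using X0 by simp
next
  case MInf then show ?thesis by simp
qed

context setting begin

abbreviation "Eset m \<equiv> {\<omega>\<in>space M. Ep P A \<tau> m (\<lambda>j. U j \<omega>)}"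
abbreviation "Zset i m \<equiv> {\<omega>\<in>space M. Zp i m (\<lambda>j. U j \<omega>)}"

lemma Eset_sets[measurable]: "Eset m \<in> sets M" by measurable

lemma Zset_sets[measurable]: "Zset i m \<in> sets M"
  by (rule Zp_meas[THEN predE]) simp

lemma sumE: "(\<Sum>m. emeasure M (Eset m)) \<le> 1 + E_abs_theta0 M P A \<tau> U"
proof -
  let ?f = "\<lambda>m. emeasure M (Eset m)"
  have "?f sums ((\<Sum>m. ?f (Suc m)) + ?f 0)" by (rule sums_Suc) (rule summable_sums, simp)
  then have split: "(\<Sum>m. ?f m) = (\<Sum>m. ?f (Suc m)) + ?f 0" by (rule sums_unique[symmetric])
  have "(\<Sum>m. ?f (Suc m)) = (\<Sum>m. \<integral>\<^sup>+ \<omega>. indicator (Eset (Suc m)) \<omega> \<partial>M)"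
    by (simp add: nn_integral_indicator)
  also have "\<dots> = (\<integral>\<^sup>+ \<omega>. (\<Sum>m. indicator (Eset (Suc m)) \<omega>) \<partial>M)"
    by (rule nn_integral_suminf[symmetric]) simp
  also have "\<dots> \<le> E_abs_theta0 M P A \<tau> U" unfolding E_abs_theta0_def
  proof (rule nn_integral_mono)
    fix \<omega> assume \<omega>: "\<omega> \<in> space M"
    have "(\<Sum>m. indicator (Eset (Suc m)) \<omega> :: ennreal) =
      (\<Sum>m. if theta_bar P A \<tau> U 0 \<omega> \<le> ereal (- real (Suc m)) then 1 else 0 :: ennreal)"
      using \<omega> by (simp add: theta_le_iff' indicator_def of_bool_def del: of_nat_Suc)
    also have "\<dots> \<le> e2ennreal \<bar>theta_bar P A \<tau> U 0 \<omega>\<bar>"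
      by (rule count_le) (rule theta_le0[OF A1 kr ct])
    finally show "(\<Sum>m. indicator (Eset (Suc m)) \<omega> :: ennreal) \<le> e2ennreal \<bar>theta_bar P A \<tau> U 0 \<omega>\<bar>" .
  qed
  finally have "(\<Sum>m. ?f (Suc m)) \<le> E_abs_theta0 M P A \<tau> U" .
  moreover have "?f 0 \<le> 1" by (rule emeasure_le_1)
  ultimately show ?thesis unfolding split by (simp add: add.commute add_mono)
qed

lemma part1:
  assumes fin: "E_abs_theta0 M P A \<tau> U < \<infinity>"
  shows "prob {\<omega>\<in>space M. enat i < Lk P A \<tau> U 0 \<omega>} \<le> (enn2real (E_abs_theta0 M P A \<tau> U) + 1) * prob (Zset i 0)"
proof -
  define p where "p = prob (Zset i 0)"
  define E where "E = E_abs_theta0 M P A \<tau> U"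
  have p0: "0 \<le> p" unfolding p_def by simp
  have pm: "prob (Zset i m) = p" for m unfolding p_def Zp_prob by simp
  have sub: "{\<omega>\<in>space M. enat i < Lk P A \<tau> U 0 \<omega>} \<subseteq> (\<Union>m. Eset m \<inter> Zset i m)"
  proof safe
    fix \<omega> assume \<omega>: "\<omega> \<in> space M" "enat i < Lk P A \<tau> U 0 \<omega>"
    have "\<not> Lk P A \<tau> U 0 \<omega> \<le> enat i" using \<omega>(2) by simp
    then obtain m where m: "theta_bar P A \<tau> U 0 \<omega> \<le> ereal (- real m)" "\<not> zeta P A \<tau> U (- int m) \<omega> \<le> enat i"
      unfolding L_le_iff' by blast
    have "alpha_ki P A \<tau> (cn P A \<tau> U (- int m - 1) \<omega>) (int i) \<le> U (- int m) \<omega>"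
      using m(2) unfolding zeta_eq' by (rule zf_gt')
    then have "Zp i m (\<lambda>j. U j \<omega>)" unfolding Zp_def cn_eq' by (simp add: algebra_simps)
    moreover have "Ep P A \<tau> m (\<lambda>j. U j \<omega>)" using m(1) unfolding theta_le_iff' .
    ultimately show "\<omega> \<in> (\<Union>m. Eset m \<inter> Zset i m)" using \<omega> by blast
  qed
  have "emeasure M {\<omega>\<in>space M. enat i < Lk P A \<tau> U 0 \<omega>} \<le> emeasure M (\<Union>m. Eset m \<inter> Zset i m)"
    by (rule emeasure_mono[OF sub]) measurable
  also have "\<dots> \<le> (\<Sum>m. emeasure M (Eset m \<inter> Zset i m))"
    by (rule emeasure_subadditive_countably) auto
  also have "(\<Sum>m. emeasure M (Eset m \<inter> Zset i m)) = (\<Sum>m. emeasure M (Eset m) * ennreal p)"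
  proof (rule suminf_cong)
    fix m
    have "emeasure M (Eset m \<inter> Zset i m) = ennreal (prob (Eset m) * prob (Zset i m))"
      unfolding indep_EZ[symmetric] by (simp add: emeasure_eq_measure)
    also have "\<dots> = emeasure M (Eset m) * ennreal p" by (simp add: pm emeasure_eq_measure ennreal_mult p0)
    finally show "emeasure M (Eset m \<inter> Zset i m) = emeasure M (Eset m) * ennreal p" .
  qed
  also have "\<dots> = (\<Sum>m. emeasure M (Eset m)) * ennreal p" by simp
  also have "\<dots> \<le> (1 + E) * ennreal p" unfolding E_def by (rule mult_right_mono[OF sumE]) simp
  also have "\<dots> = ennreal ((enn2real E + 1) * p)"
    using fin p0 unfolding E_def by (cases "E_abs_theta0 M P A \<tau> U") (auto simp: ennreal_mult ennreal_plus add.commute)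
  finally have "emeasure M {\<omega>\<in>space M. enat i < Lk P A \<tau> U 0 \<omega>} \<le> ennreal ((enn2real E + 1) * p)" .
  then show ?thesis unfolding E_def p_def using p0
    by (simp add: emeasure_eq_measure ennreal_le_iff)
qed


lemma Zset0_eq: "Zset i 0 = {\<omega>\<in>space M. alpha_ki P A \<tau> (cn P A \<tau> U (-1) \<omega>) (int i) \<le> U 0 \<omega>}"
  unfolding Zp_def cn_eq' by (simp add: algebra_simps)

lemma main:
  assumes fin: "E_abs_theta0 M P A \<tau> U < \<infinity>"
  shows "prob {\<omega> \<in> space M. enat i < Lk P A \<tau> U 0 \<omega>}
           \<le> (enn2real (E_abs_theta0 M P A \<tau> U) + 1) *
              prob {\<omega> \<in> space M. alpha_ki P A \<tau> (cn P A \<tau> U (-1) \<omega>) (int i) \<le> U 0 \<omega>}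
       \<and> prob {\<omega> \<in> space M. Lk P A \<tau> U 0 \<omega> \<le> enat i} \<ge> alpha_m1 P A
       \<and> prob {\<omega> \<in> space M. Lk P A \<tau> U 0 \<omega> \<le> enat i}
           \<ge> max (1 - (enn2real (E_abs_theta0 M P A \<tau> U) + 1) *
                      prob {\<omega> \<in> space M. alpha_ki P A \<tau> (cn P A \<tau> U (-1) \<omega>) (int i) \<le> U 0 \<omega>})
                  (alpha_m1 P A)"
proof -
  have p1: "prob {\<omega> \<in> space M. enat i < Lk P A \<tau> U 0 \<omega>}
           \<le> (enn2real (E_abs_theta0 M P A \<tau> U) + 1) *
              prob {\<omega> \<in> space M. alpha_ki P A \<tau> (cn P A \<tau> U (-1) \<omega>) (int i) \<le> U 0 \<omega>}"
    using part1[OF fin, of i] unfolding Zset0_eq .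
  have p2: "prob {\<omega> \<in> space M. Lk P A \<tau> U 0 \<omega> \<le> enat i} \<ge> alpha_m1 P A" by (rule part2)
  have eq: "{\<omega> \<in> space M. Lk P A \<tau> U 0 \<omega> \<le> enat i} = space M - {\<omega> \<in> space M. enat i < Lk P A \<tau> U 0 \<omega>}"
    by (auto simp: not_less)
  have "{\<omega> \<in> space M. enat i < Lk P A \<tau> U 0 \<omega>} \<in> events"
  proof -
    have "{\<omega> \<in> space M. enat i < Lk P A \<tau> U 0 \<omega>} = space M - {\<omega> \<in> space M. Lk P A \<tau> U 0 \<omega> \<le> enat i}"
      by (auto simp: not_less)
    also have "\<dots> \<in> events" by measurable
    finally show ?thesis .
  qed
  then have p3: "prob {\<omega> \<in> space M. Lk P A \<tau> U 0 \<omega> \<le> enat i} = 1 - prob {\<omega> \<in> space M. enat i < Lk P A \<tau> U 0 \<omega>}"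
    unfolding eq by (rule prob_compl)
  show ?thesis using p1 p2 p3 by auto
qed

end

theorem mainTheorem12:
  fixes A :: "nat set" and P :: "nat \<Rightarrow> past \<Rightarrow> real" and \<tau> :: "ctx set"
    and M :: "'w measure" and U :: "int \<Rightarrow> 'w \<Rightarrow> real" and i :: nat
  assumes alphabet: "A = {1..} \<or> (\<exists>n\<ge>1. A = {1..n})"
    and kernel_range: "\<forall>z\<in>Pasts A. \<forall>a\<in>A. 0 \<le> P a z \<and> P a z \<le> 1"
    and kernel_sum: "\<forall>z\<in>Pasts A. ((\<lambda>a. P a z) has_sum 1) A"
    and skel: "skeleton A \<tau>"
    and lc: "LC P A \<tau>"
    and ps: "prob_space M"
    and indep: "prob_space.indep_vars M (\<lambda>_. borel) U UNIV"
    and unif: "\<forall>j. distr M borel (U j) = uniform_measure lborel {0..<1::real}"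
    and good: "E_abs_theta0 M P A \<tau> U < \<infinity>"
  shows "measure M {\<omega> \<in> space M. enat i < Lk P A \<tau> U 0 \<omega>}
           \<le> (enn2real (E_abs_theta0 M P A \<tau> U) + 1) *
              measure M {\<omega> \<in> space M. alpha_ki P A \<tau> (cn P A \<tau> U (-1) \<omega>) (int i) \<le> U 0 \<omega>}
       \<and> measure M {\<omega> \<in> space M. Lk P A \<tau> U 0 \<omega> \<le> enat i} \<ge> alpha_m1 P A
       \<and> measure M {\<omega> \<in> space M. Lk P A \<tau> U 0 \<omega> \<le> enat i}
           \<ge> max (1 - (enn2real (E_abs_theta0 M P A \<tau> U) + 1) *
                      measure M {\<omega> \<in> space M. alpha_ki P A \<tau> (cn P A \<tau> U (-1) \<omega>) (int i) \<le> U 0 \<omega>})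
                  (alpha_m1 P A)"
proof -
  have A1: "1 \<in> A" using alphabet by auto
  interpret S: setting M P A \<tau> U
    using ps A1 kernel_range kernel_sum skel indep unif
    unfolding setting_def setting_axioms_def skeleton_def by auto
  show ?thesis by (rule S.main[OF good])
qed

end
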